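(* Let $G$ be countably infinite and let $L:G\to[0,\infty)$ be proper. (1) If $G$ has polynomial H-growth with respect to $L$, then there exists $s_0>0$ such that $(G,\sigma)$ is $(1+L)^{s_0}$-decaying for every normalized 2-cocycle $\sigma$ (in particular, if $L$ is a length function, $G$ has the $\sigma$-twisted rapid decay property w.r.t. $L$). (2) If $G$ has subexponential H-growth with respect to $L$, then $(G,\sigma)$ is $a^L$-decaying for every $a>1$ and every normalized 2-cocycle $\sigma$.
   Context: $G$ is a discrete group, $\sigma:G\times G\to\mathbb{T}$ a normalized 2-cocycle ($\sigma(g,h)\sigma(gh,k)=\sigma(h,k)\sigma(g,hk)$, $\sigma(g,e)=\sigma(e,g)=1$), $\Lambda_\sigma(g)$ the unitary on $\ell^2(G)$ with $(\Lambda_\sigma(g)\xi)(h)=\sigma(g,g^{-1}h)\xi(g^{-1}h)$, $\lambda=\Lambda_1$, $C^*_r(G,\sigma)$ the operator-norm closed $*$-algebra generated by $\Lambda_\sigma(G)$. $\mathcal{K}(G)$ = finitely supported functions, $\pi_\sigma(f)=\sum_g f(g)\Lambda_\sigma(g)$, $\pi_\lambda=\pi_1$. A function $L:G\to[0,\infty)$ is proper if $L^{-1}([0,t])$ is finite for all $t\ge0$. For finite nonempty $E\subseteq G$, the Haagerup content is $c(E)=\sup\{\|\pi_\lambda(f)\|\mid f\in\mathcal{K}(G),\ \mathrm{supp}f\subseteq E,\ \|f\|_2=1\}$. With $B_{r,L}=\{g\in G\mid L(g)\le r\}$: $G$ has polynomial H-growth w.r.t. $L$ if there are $K,p>0$ with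 $c(B_{r,L})\le K(1+r)^p$ for all $r\ge0$; $G$ has subexponential H-growth w.r.t. $L$ if for every $b>1$ there is $r_0$ with $c(B_{r,L})<b^r$ for all $r\ge r_0$. For $\kappa:G\to[1,\infty)$, $\|\xi\|_{2,\kappa}=\|\xi\kappa\|_2$; $(G,\sigma)$ is $\kappa$-decaying if $f\mapsto\pi_\sigma(f)$ is bounded from $(\mathcal{K}(G),\|\cdot\|_{2,\kappa})$ to $C^*_r(G,\sigma)$ with operator norm. A length function satisfies $L(e)=0$, $L(g^{-1})=L(g)$, $L(gh)\le L(g)+L(h)$; $G$ has the $\sigma$-twisted rapid decay property w.r.t. a length function $L$ if $(G,\sigma)$ is $(1+L)^{s}$-decaying for some $s>0$. *)

theory Defs
  imports "HOL-Analysis.Analysis"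
begin

text \<open>The discrete group G is a type of class group_add (written additively,
  NOT assumed commutative): g * h is g + h, g^-1 is -g, e is 0.
  Vectors of l^2(G) are functions 'g \<Rightarrow> complex.\<close>

definition normalized_2cocycle :: "('g::group_add \<Rightarrow> 'g \<Rightarrow> complex) \<Rightarrow> bool" where
  "normalized_2cocycle \<sigma> \<longleftrightarrow>
     (\<forall>g h. cmod (\<sigma> g h) = 1) \<and>
     (\<forall>g h k. \<sigma> g h * \<sigma> (g + h) k = \<sigma> h k * \<sigma> g (h + k)) \<and>
     (\<forall>g. \<sigma> g 0 = 1 \<and> \<sigma> 0 g = 1)"

definition sq_summable :: "('g \<Rightarrow> complex) \<Rightarrow> bool" where
  "sq_summable \<xi> \<longleftrightarrow> (\<lambda>g. (cmod (\<xi> g))\<^sup>2) summable_on UNIV"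

definition l2norm :: "('g \<Rightarrow> complex) \<Rightarrow> real" where
  "l2norm \<xi> = sqrt (\<Sum>\<^sub>\<infinity>g. (cmod (\<xi> g))\<^sup>2)"

definition fin_supp :: "('g \<Rightarrow> complex) \<Rightarrow> bool" where
  "fin_supp f \<longleftrightarrow> finite {g. f g \<noteq> 0}"

definition Lambda_tw :: "('g::group_add \<Rightarrow> 'g \<Rightarrow> complex) \<Rightarrow> 'g \<Rightarrow> ('g \<Rightarrow> complex) \<Rightarrow> ('g \<Rightarrow> complex)" where
  "Lambda_tw \<sigma> g \<xi> = (\<lambda>h. \<sigma> g (- g + h) * \<xi> (- g + h))"

definition pi_tw :: "('g::group_add \<Rightarrow> 'g \<Rightarrow> complex) \<Rightarrow> ('g \<Rightarrow> complex) \<Rightarrow> ('g \<Rightarrow> complex) \<Rightarrow> ('g \<Rightarrow> complex)" where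
  "pi_tw \<sigma> f \<xi> = (\<lambda>h. \<Sum>g\<in>{g. f g \<noteq> 0}. f g * Lambda_tw \<sigma> g \<xi> h)"

definition trivial_cocycle :: "'g \<Rightarrow> 'g \<Rightarrow> complex" where
  "trivial_cocycle g h = 1"

definition op_norm :: "(('g \<Rightarrow> complex) \<Rightarrow> ('g \<Rightarrow> complex)) \<Rightarrow> real" where
  "op_norm T = Sup {l2norm (T \<xi>) | \<xi>. sq_summable \<xi> \<and> l2norm \<xi> \<le> 1}"

text \<open>Haagerup content c(E) (meaningful for finite nonempty E).\<close>
definition haagerup_content :: "'g::group_add set \<Rightarrow> real" where
  "haagerup_content E = Sup {op_norm (pi_tw trivial_cocycle f) | f.
       fin_supp f \<and> {g. f g \<noteq> 0} \<subseteq> E \<and> l2norm f = 1}"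

definition ball_L :: "('g \<Rightarrow> real) \<Rightarrow> real \<Rightarrow> 'g set" where
  "ball_L L r = {g. L g \<le> r}"

definition proper_fun :: "('g \<Rightarrow> real) \<Rightarrow> bool" where
  "proper_fun L \<longleftrightarrow> (\<forall>t\<ge>0. finite {g. L g \<le> t})"

text \<open>c(B_{r,L}) is only considered when B_{r,L} is nonempty (c is only defined
  for nonempty sets).\<close>
definition poly_H_growth :: "('g::group_add \<Rightarrow> real) \<Rightarrow> bool" where
  "poly_H_growth L \<longleftrightarrow> (\<exists>K>0. \<exists>p>0. \<forall>r\<ge>0. ball_L L r \<noteq> {} \<longrightarrow>
      haagerup_content (ball_L L r) \<le> K * (1 + r) powr p)"

definition subexp_H_growth :: "('g::group_add \<Rightarrow> real) \<Rightarrow> bool" where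
  "subexp_H_growth L \<longleftrightarrow> (\<forall>b>1. \<exists>r0. \<forall>r\<ge>r0. ball_L L r \<noteq> {} \<longrightarrow>
      haagerup_content (ball_L L r) < b powr r)"

definition decaying :: "('g::group_add \<Rightarrow> 'g \<Rightarrow> complex) \<Rightarrow> ('g \<Rightarrow> real) \<Rightarrow> bool" where
  "decaying \<sigma> \<kappa> \<longleftrightarrow> (\<exists>C. \<forall>f. fin_supp f \<longrightarrow>
      op_norm (pi_tw \<sigma> f) \<le> C * l2norm (\<lambda>g. f g * complex_of_real (\<kappa> g)))"

end

theory Submission
  imports Defs
begin


lemma L2fin:
  assumes "sq_summable \<eta>" "finite F"
  shows "L2_set (\<lambda>x. cmod (\<eta> x)) F \<le> l2norm \<eta>"
proof -
  have "(\<Sum>x\<in>F. (cmod (\<eta> x))\<^sup>2) \<le> (\<Sum>\<^sub>\<infinity>x. (cmod (\<eta> x))\<^sup>2)"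
    by (rule finite_sum_le_infsum) (use assms in \<open>auto simp: sq_summable_def\<close>)
  then show ?thesis unfolding L2_set_def l2norm_def by simp
qed

lemma L2bound:
  assumes "\<And>F. finite F \<Longrightarrow> L2_set (\<lambda>x. cmod (\<eta> x)) F \<le> M" "0 \<le> M"
  shows "sq_summable \<eta> \<and> l2norm \<eta> \<le> M"
proof -
  have b: "(\<Sum>x\<in>F. (cmod (\<eta> x))\<^sup>2) \<le> M\<^sup>2" if "finite F" for F
  proof -
    have "sqrt (\<Sum>x\<in>F. (cmod (\<eta> x))\<^sup>2) \<le> M" using assms(1)[OF that] by (simp add: L2_set_def)
    then show ?thesis using assms(2) by (metis real_le_rsqrt sqrt_le_D)
  qed
  have s: "(\<lambda>x. (cmod (\<eta> x))\<^sup>2) summable_on UNIV"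
    by (rule nonneg_bdd_above_summable_on) (use b in \<open>auto intro!: bdd_aboveI\<close>)
  have "(\<Sum>\<^sub>\<infinity>x. (cmod (\<eta> x))\<^sup>2) \<le> M\<^sup>2"
    by (rule infsum_le_finite_sums[OF s]) (use b in auto)
  then have "l2norm \<eta> \<le> sqrt (M\<^sup>2)" unfolding l2norm_def using real_sqrt_le_mono by blast
  then show ?thesis using s assms(2) by (simp add: sq_summable_def)
qed

lemma L2sum:
  assumes "finite N"
  shows "L2_set (\<lambda>x. \<Sum>n\<in>N. u n x) F \<le> (\<Sum>n\<in>N. L2_set (u n) F)"
  using assms
proof (induction N rule: finite_induct)
  case empty
  then show ?case by (simp add: L2_set_def)
next
  case (insert a N)
  have "L2_set (\<lambda>x. \<Sum>n\<in>insert a N. u n x) F = L2_set (\<lambda>x. u a x + (\<Sum>n\<in>N. u n x)) F"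
    using insert by simp
  also have "\<dots> \<le> L2_set (u a) F + L2_set (\<lambda>x. \<Sum>n\<in>N. u n x) F"
    by (rule L2_set_triangle_ineq)
  also have "\<dots> \<le> L2_set (u a) F + (\<Sum>n\<in>N. L2_set (u n) F)" using insert by simp
  finally show ?case using insert by simp
qed

lemma L2_translate:
  fixes \<eta> :: "'g::group_add \<Rightarrow> complex"
  assumes "sq_summable \<eta>" "finite F"
  shows "L2_set (\<lambda>x. cmod (\<eta> (- g + x))) F \<le> l2norm \<eta>"
proof -
  have "L2_set (\<lambda>x. cmod (\<eta> (- g + x))) F = L2_set (\<lambda>x. cmod (\<eta> x)) ((\<lambda>x. - g + x) ` F)"
    unfolding L2_set_def by (subst sum.reindex) (auto simp: inj_on_def)
  also have "\<dots> \<le> l2norm \<eta>" using assms by (intro L2fin) auto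
  finally show ?thesis .
qed

lemma G1fin:
  fixes \<eta> :: "'g::group_add \<Rightarrow> complex"
  assumes "sq_summable \<eta>" "finite F" "finite S" "\<forall>g h. cmod (\<sigma> g h) \<le> 1"
  shows "L2_set (\<lambda>x. cmod (\<Sum>g\<in>S. f g * Lambda_tw \<sigma> g \<eta> x)) F \<le> (\<Sum>g\<in>S. cmod (f g)) * l2norm \<eta>"
proof -
  have "L2_set (\<lambda>x. cmod (\<Sum>g\<in>S. f g * Lambda_tw \<sigma> g \<eta> x)) F
      \<le> L2_set (\<lambda>x. \<Sum>g\<in>S. cmod (f g) * cmod (\<eta> (- g + x))) F"
  proof (rule L2_set_mono)
    fix x
    have "cmod (\<Sum>g\<in>S. f g * Lambda_tw \<sigma> g \<eta> x) \<le> (\<Sum>g\<in>S. cmod (f g * Lambda_tw \<sigma> g \<eta> x))"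
      by (rule norm_sum)
    also have "\<dots> \<le> (\<Sum>g\<in>S. cmod (f g) * cmod (\<eta> (- g + x)))"
    proof (rule sum_mono)
      fix g
      have "cmod (\<sigma> g (- g + x)) * cmod (\<eta> (- g + x)) \<le> 1 * cmod (\<eta> (- g + x))"
        using assms(4) by (intro mult_right_mono) auto
      then show "cmod (f g * Lambda_tw \<sigma> g \<eta> x) \<le> cmod (f g) * cmod (\<eta> (- g + x))"
        unfolding Lambda_tw_def norm_mult by (simp add: mult_left_mono mult.assoc)
    qed
    finally show "cmod (\<Sum>g\<in>S. f g * Lambda_tw \<sigma> g \<eta> x) \<le> (\<Sum>g\<in>S. cmod (f g) * cmod (\<eta> (- g + x)))" .
  qed auto
  also have "\<dots> \<le> (\<Sum>g\<in>S. L2_set (\<lambda>x. cmod (f g) * cmod (\<eta> (- g + x))) F)"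
    by (rule L2sum[OF assms(3)])
  also have "\<dots> = (\<Sum>g\<in>S. cmod (f g) * L2_set (\<lambda>x. cmod (\<eta> (- g + x))) F)"
    by (simp add: L2_set_right_distrib)
  also have "\<dots> \<le> (\<Sum>g\<in>S. cmod (f g) * l2norm \<eta>)"
    by (intro sum_mono mult_left_mono L2_translate assms) auto
  finally show ?thesis by (simp add: sum_distrib_right)
qed

lemma G1:
  fixes \<eta> :: "'g::group_add \<Rightarrow> complex"
  assumes "sq_summable \<eta>" "fin_supp f" "\<forall>g h. cmod (\<sigma> g h) \<le> 1"
  shows "sq_summable (pi_tw \<sigma> f \<eta>) \<and> l2norm (pi_tw \<sigma> f \<eta>) \<le> (\<Sum>g\<in>{g. f g \<noteq> 0}. cmod (f g)) * l2norm \<eta>"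
  unfolding pi_tw_def
  apply (rule L2bound)
   apply (rule G1fin)
  using assms by (auto simp: fin_supp_def l2norm_def intro!: mult_nonneg_nonneg sum_nonneg infsum_nonneg)



lemma finsupp_l2:
  assumes "finite S" "\<And>x. x \<notin> S \<Longrightarrow> f x = 0"
  shows "sq_summable f \<and> l2norm f = L2_set (\<lambda>x. cmod (f x)) S"
proof -
  have e: "(\<Sum>\<^sub>\<infinity>x. (cmod (f x))\<^sup>2) = (\<Sum>\<^sub>\<infinity>x\<in>S. (cmod (f x))\<^sup>2)"
    by (rule infsum_cong_neutral) (use assms in auto)
  have "(\<lambda>x. (cmod (f x))\<^sup>2) summable_on UNIV \<longleftrightarrow> (\<lambda>x. (cmod (f x))\<^sup>2) summable_on S"
    by (rule summable_on_cong_neutral) (use assms in auto)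
  then show ?thesis using e assms(1) by (simp add: sq_summable_def l2norm_def L2_set_def)
qed

lemma coef_le:
  assumes "fin_supp f"
  shows "cmod (f g) \<le> l2norm f"
proof -
  let ?S = "{g. f g \<noteq> 0}"
  have fS: "finite ?S" using assms by (simp add: fin_supp_def)
  have l: "l2norm f = L2_set (\<lambda>x. cmod (f x)) ?S"
    using finsupp_l2[of ?S f] fS by blast
  have "L2_set (\<lambda>x. cmod (f x)) {g} \<le> L2_set (\<lambda>x. cmod (f x)) ?S"
  proof (cases "f g = 0")
    case True then show ?thesis by (simp add: L2_set_def sum_nonneg)
  next
    case False
    then have "{g} \<subseteq> ?S" by auto
    then have "(\<Sum>x\<in>{g}. (cmod (f x))\<^sup>2) \<le> (\<Sum>x\<in>?S. (cmod (f x))\<^sup>2)"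
      using fS by (intro sum_mono2) auto
    then show ?thesis unfolding L2_set_def by (rule real_sqrt_le_mono)
  qed
  moreover have "L2_set (\<lambda>x. cmod (f x)) {g} = cmod (f g)" by (simp add: L2_set_def)
  ultimately show ?thesis using l by simp
qed

definition opset :: "(('g \<Rightarrow> complex) \<Rightarrow> ('g \<Rightarrow> complex)) \<Rightarrow> real set" where
  "opset T = {l2norm (T \<xi>) | \<xi>. sq_summable \<xi> \<and> l2norm \<xi> \<le> 1}"

lemma zero_sq: "sq_summable (\<lambda>x::'g. 0::complex) \<and> l2norm (\<lambda>x::'g. 0::complex) = 0"
  using finsupp_l2[of "{}::'g set" "\<lambda>x::'g. 0::complex"] by (simp add: L2_set_def)

lemma opnorm_le:
  assumes "fin_supp f" "\<forall>g h. cmod (\<sigma> g h) \<le> 1"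
  shows "bdd_above (opset (pi_tw \<sigma> f)) \<and> op_norm (pi_tw \<sigma> f) \<le> (\<Sum>g\<in>{g. f g \<noteq> 0}. cmod (f g))"
proof -
  let ?B = "(\<Sum>g\<in>{g. f g \<noteq> 0}. cmod (f g))"
  have b: "y \<le> ?B" if yin: "y \<in> opset (pi_tw \<sigma> f)" for y
  proof -
    obtain \<xi> where x: "y = l2norm (pi_tw \<sigma> f \<xi>)" "sq_summable \<xi>" "l2norm \<xi> \<le> 1"
      using yin unfolding opset_def by blast
    have "y \<le> ?B * l2norm \<xi>" using G1[OF x(2) assms] x(1) by simp
    also have "\<dots> \<le> ?B * 1" using x(3) by (intro mult_left_mono) (auto intro: sum_nonneg)
    finally show ?thesis by simp
  qed
  have ne: "opset (pi_tw \<sigma> f) \<noteq> {}" using zero_sq unfolding opset_def by fastforce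
  have "op_norm (pi_tw \<sigma> f) \<le> ?B"
    unfolding op_norm_def opset_def[symmetric] using b ne by (meson cSup_least)
  moreover have "bdd_above (opset (pi_tw \<sigma> f))" using b by (meson bdd_aboveI)
  ultimately show ?thesis by simp
qed

definition hcset :: "'g::group_add set \<Rightarrow> real set" where
  "hcset E = {op_norm (pi_tw trivial_cocycle f) | f.
       fin_supp f \<and> {g. f g \<noteq> 0} \<subseteq> E \<and> l2norm f = 1}"

lemma triv_le: "\<forall>g h. cmod (trivial_cocycle g h) \<le> 1"
  by (simp add: trivial_cocycle_def)

lemma hc_bdd:
  assumes "finite E"
  shows "bdd_above (hcset E)"
proof (rule bdd_aboveI)
  fix y assume "y \<in> hcset E"
  then obtain f where f: "y = op_norm (pi_tw trivial_cocycle f)" "fin_supp f" "{g. f g \<noteq> 0} \<subseteq> E" "l2norm f = 1"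
    by (auto simp: hcset_def)
  have "y \<le> (\<Sum>g\<in>{g. f g \<noteq> 0}. cmod (f g))" using opnorm_le[OF f(2) triv_le] f(1) by simp
  also have "\<dots> \<le> (\<Sum>g\<in>{g. f g \<noteq> 0}. 1)" using coef_le[OF f(2)] f(4) by (intro sum_mono) auto
  also have "\<dots> = card {g. f g \<noteq> 0}" by simp
  also have "\<dots> \<le> card E" using f(3) assms by (meson card_mono of_nat_le_iff)
  finally show "y \<le> real (card E)" .
qed



lemma keyK:
  fixes \<xi> :: "'g::group_add \<Rightarrow> complex"
  assumes E: "finite E" "T \<subseteq> E" and a: "\<forall>g\<in>T. a g \<ge> 0"
    and xi: "sq_summable \<xi>" "l2norm \<xi> \<le> 1" and F: "finite F"
  shows "L2_set (\<lambda>x. \<Sum>g\<in>T. a g * cmod (\<xi> (- g + x))) F \<le> max (haagerup_content E) 0 * L2_set a T"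
proof -
  have fT: "finite T" using E finite_subset by blast
  define s where "s = L2_set a T"
  show ?thesis
  proof (cases "s = 0")
    case True
    then have "\<forall>g\<in>T. a g = 0" using L2_set_eq_0_iff[OF fT, of a] unfolding s_def by simp
    then have "L2_set (\<lambda>x. \<Sum>g\<in>T. a g * cmod (\<xi> (- g + x))) F = 0"
      by (simp add: L2_set_def)
    moreover have "L2_set a T = 0" using True unfolding s_def .
    ultimately show ?thesis by simp
  next
    case False
    have "s \<ge> 0" unfolding s_def by (rule L2_set_nonneg)
    then have s0: "s > 0" using False by linarith
    define f' where "f' g = (if g \<in> T then complex_of_real (a g / s) else 0)" for g
    have supp: "{g. f' g \<noteq> 0} \<subseteq> T" by (auto simp: f'_def)
    have fs: "fin_supp f'" using supp fT by (simp add: fin_supp_def finite_subset)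
    have "l2norm f' = L2_set (\<lambda>x. cmod (f' x)) T"
      using finsupp_l2[of T f'] fT by (auto simp: f'_def)
    also have "\<dots> = L2_set (\<lambda>x. a x * (1/s)) T"
      using a s0 by (intro L2_set_cong) (auto simp: f'_def norm_divide)
    also have "\<dots> = s * (1/s)" using L2_set_left_distrib[of "1/s" a T] s0 unfolding s_def by simp
    finally have n1: "l2norm f' = 1" using s0 by simp
    define \<eta> where "\<eta> x = complex_of_real (cmod (\<xi> x))" for x
    have ceta: "cmod (\<eta> x) = cmod (\<xi> x)" for x by (simp add: \<eta>_def)
    have eta: "sq_summable \<eta>" "l2norm \<eta> \<le> 1"
      using xi by (simp_all add: sq_summable_def l2norm_def ceta)
    have pe: "cmod (pi_tw trivial_cocycle f' \<eta> x) = (1/s) * (\<Sum>g\<in>T. a g * cmod (\<xi> (- g + x)))" for x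
    proof -
      have "pi_tw trivial_cocycle f' \<eta> x = (\<Sum>g\<in>T. f' g * Lambda_tw trivial_cocycle g \<eta> x)"
        unfolding pi_tw_def by (rule sum.mono_neutral_left) (use fT supp in auto)
      also have "\<dots> = complex_of_real (\<Sum>g\<in>T. (1/s) * (a g * cmod (\<xi> (- g + x))))"
        by (auto simp: f'_def Lambda_tw_def trivial_cocycle_def \<eta>_def intro!: sum.cong)
      finally have "cmod (pi_tw trivial_cocycle f' \<eta> x) = \<bar>\<Sum>g\<in>T. (1/s) * (a g * cmod (\<xi> (- g + x)))\<bar>"
        by (simp only: norm_of_real)
      also have "\<dots> = (\<Sum>g\<in>T. (1/s) * (a g * cmod (\<xi> (- g + x))))"
        using a s0 by (intro abs_of_nonneg sum_nonneg) auto
      finally show ?thesis by (simp add: sum_distrib_left)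
    qed
    have "L2_set (\<lambda>x. \<Sum>g\<in>T. a g * cmod (\<xi> (- g + x))) F
        = L2_set (\<lambda>x. s * cmod (pi_tw trivial_cocycle f' \<eta> x)) F"
      using s0 by (intro L2_set_cong) (auto simp: pe)
    also have "\<dots> = s * L2_set (\<lambda>x. cmod (pi_tw trivial_cocycle f' \<eta> x)) F"
      using s0 by (simp add: L2_set_right_distrib)
    finally have lhs: "L2_set (\<lambda>x. \<Sum>g\<in>T. a g * cmod (\<xi> (- g + x))) F
        = s * L2_set (\<lambda>x. cmod (pi_tw trivial_cocycle f' \<eta> x)) F" .
    have g1: "sq_summable (pi_tw trivial_cocycle f' \<eta>)" using G1[OF eta(1) fs triv_le] by blast
    have "L2_set (\<lambda>x. cmod (pi_tw trivial_cocycle f' \<eta> x)) F \<le> l2norm (pi_tw trivial_cocycle f' \<eta>)"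
      by (rule L2fin[OF g1 F])
    also have "\<dots> \<le> op_norm (pi_tw trivial_cocycle f')"
    proof -
      have "l2norm (pi_tw trivial_cocycle f' \<eta>) \<in> opset (pi_tw trivial_cocycle f')"
        unfolding opset_def using eta by blast
      then show ?thesis unfolding op_norm_def opset_def[symmetric]
        using opnorm_le[OF fs triv_le] by (meson cSup_upper)
    qed
    also have "\<dots> \<le> haagerup_content E"
    proof -
      have "op_norm (pi_tw trivial_cocycle f') \<in> hcset E"
        unfolding hcset_def using fs supp E n1 by blast
      then show ?thesis unfolding haagerup_content_def hcset_def[symmetric]
        using hc_bdd[OF E(1)] by (meson cSup_upper)
    qed
    also have "\<dots> \<le> max (haagerup_content E) 0" by simp
    finally have "L2_set (\<lambda>x. cmod (pi_tw trivial_cocycle f' \<eta> x)) F \<le> max (haagerup_content E) 0" .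
    then have "s * L2_set (\<lambda>x. cmod (pi_tw trivial_cocycle f' \<eta> x)) F \<le> s * max (haagerup_content E) 0"
      using s0 by (intro mult_left_mono) auto
    then show ?thesis using lhs s_def by (simp add: mult.commute)
  qed
qed



lemma dom_pt:
  assumes "\<forall>g h. cmod (\<sigma> g h) \<le> 1"
  shows "cmod (pi_tw \<sigma> f \<xi> x) \<le> (\<Sum>g\<in>{g. f g \<noteq> 0}. cmod (f g) * cmod (\<xi> (- g + x)))"
proof -
  have "cmod (pi_tw \<sigma> f \<xi> x) \<le> (\<Sum>g\<in>{g. f g \<noteq> 0}. cmod (f g * Lambda_tw \<sigma> g \<xi> x))"
    unfolding pi_tw_def by (rule norm_sum)
  also have "\<dots> \<le> (\<Sum>g\<in>{g. f g \<noteq> 0}. cmod (f g) * cmod (\<xi> (- g + x)))"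
  proof (rule sum_mono)
    fix g
    have "cmod (\<sigma> g (- g + x)) * cmod (\<xi> (- g + x)) \<le> 1 * cmod (\<xi> (- g + x))"
      using assms by (intro mult_right_mono) auto
    then show "cmod (f g * Lambda_tw \<sigma> g \<xi> x) \<le> cmod (f g) * cmod (\<xi> (- g + x))"
      unfolding Lambda_tw_def norm_mult by (simp add: mult_left_mono mult.assoc)
  qed
  finally show ?thesis .
qed

lemma decay_general:
  fixes L :: "'g::group_add \<Rightarrow> real" and \<kappa> :: "'g \<Rightarrow> real"
  assumes L0: "\<forall>g. L g \<ge> 0" and prp: "proper_fun L"
    and sig: "\<forall>g h. cmod (\<sigma> g h) \<le> 1"
    and w: "\<And>n. w n > 0" and kw: "\<And>g. \<kappa> g \<ge> w (nat \<lceil>L g\<rceil>)"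
    and bound: "\<And>N. finite N \<Longrightarrow> (\<forall>n\<in>N. ball_L L (real n) \<noteq> {}) \<Longrightarrow>
        (\<Sum>n\<in>N. max (haagerup_content (ball_L L (real n))) 0 / w n) \<le> C"
  shows "decaying \<sigma> \<kappa>"
  unfolding decaying_def
proof (intro exI allI impI)
  fix f :: "'g \<Rightarrow> complex" assume fs: "fin_supp f"
  define S where "S = {g. f g \<noteq> 0}"
  have fS: "finite S" using fs by (simp add: S_def fin_supp_def)
  define X where "X = l2norm (\<lambda>g. f g * complex_of_real (\<kappa> g))"
  have fk: "sq_summable (\<lambda>g. f g * complex_of_real (\<kappa> g))"
    using finsupp_l2[of S "\<lambda>g. f g * complex_of_real (\<kappa> g)"] fS by (auto simp: S_def)
  have X0: "X \<ge> 0" unfolding X_def l2norm_def by (auto intro!: infsum_nonneg)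
  have C0: "C \<ge> 0" using bound[of "{}"] by simp
  define a where "a g = cmod (f g)" for g
  define \<nu> where "\<nu> g = nat \<lceil>L g\<rceil>" for g
  define N where "N = \<nu> ` S"
  define A where "A n = {g\<in>S. \<nu> g = n}" for n
  define c where "c n = max (haagerup_content (ball_L L (real n))) 0" for n
  have fN: "finite N" using fS by (simp add: N_def)
  have Lle: "L g \<le> real (\<nu> g)" for g using L0 by (simp add: \<nu>_def)
  have ball: "ball_L L (real n) \<noteq> {}" if "n \<in> N" for n
    using that Lle by (auto simp: N_def ball_L_def)
  have Afin: "finite (ball_L L (real n))" for n
    using prp unfolding proper_fun_def ball_L_def by auto
  have AE: "A n \<subseteq> ball_L L (real n)" for n using Lle by (auto simp: A_def ball_L_def)
  have aw: "L2_set a (A n) \<le> X / w n" for n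
  proof -
    have "L2_set a (A n) * w n = L2_set (\<lambda>g. a g * w n) (A n)"
      using w[of n] by (simp add: L2_set_left_distrib)
    also have "\<dots> \<le> L2_set (\<lambda>g. cmod (f g * complex_of_real (\<kappa> g))) (A n)"
    proof (rule L2_set_mono)
      fix g
      assume gA: "g \<in> A n"
      then have wk: "w n \<le> \<kappa> g" using kw[of g] by (auto simp: A_def \<nu>_def) 
      then have "\<kappa> g > 0" using w[of n] by linarith
      then have "cmod (f g * complex_of_real (\<kappa> g)) = a g * \<kappa> g" by (simp add: a_def norm_mult)
      moreover have "a g * w n \<le> a g * \<kappa> g" using wk by (intro mult_left_mono) (auto simp: a_def)
      ultimately show "a g * w n \<le> cmod (f g * complex_of_real (\<kappa> g))" by simp
    next
      fix g
      show "g \<in> A n \<Longrightarrow> 0 \<le> a g * w n" using w[of n] by (simp add: a_def)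
    qed
    also have "\<dots> \<le> X" unfolding X_def
      by (rule L2fin[OF fk]) (use fS in \<open>auto simp: A_def\<close>)
    finally show ?thesis using w[of n] by (simp add: pos_le_divide_eq)
  qed
  have main: "L2_set (\<lambda>x. cmod (pi_tw \<sigma> f \<xi> x)) F \<le> C * X"
    if xi: "sq_summable \<xi>" "l2norm \<xi> \<le> 1" and F: "finite F" for \<xi> F
  proof -
    have "L2_set (\<lambda>x. cmod (pi_tw \<sigma> f \<xi> x)) F \<le> L2_set (\<lambda>x. \<Sum>g\<in>S. a g * cmod (\<xi> (- g + x))) F"
      by (rule L2_set_mono) (use dom_pt[OF sig] in \<open>auto simp: S_def a_def\<close>)
    also have "\<dots> = L2_set (\<lambda>x. \<Sum>n\<in>N. \<Sum>g\<in>A n. a g * cmod (\<xi> (- g + x))) F"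
      unfolding A_def N_def by (intro L2_set_cong refl sum.group[symmetric]) (use fS in auto)
    also have "\<dots> \<le> (\<Sum>n\<in>N. L2_set (\<lambda>x. \<Sum>g\<in>A n. a g * cmod (\<xi> (- g + x))) F)"
      by (rule L2sum[OF fN])
    also have "\<dots> \<le> (\<Sum>n\<in>N. c n * L2_set a (A n))"
      unfolding c_def by (intro sum_mono keyK[OF Afin AE] xi F) (auto simp: a_def)
    also have "\<dots> \<le> (\<Sum>n\<in>N. c n * (X / w n))"
      by (intro sum_mono mult_left_mono aw) (auto simp: c_def)
    also have "\<dots> = (\<Sum>n\<in>N. c n / w n) * X" by (simp add: sum_distrib_right)
    also have "\<dots> \<le> C * X" using bound[OF fN] ball X0 unfolding c_def by (intro mult_right_mono) auto
    finally show ?thesis .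
  qed
  have b: "y \<le> C * X" if yin: "y \<in> opset (pi_tw \<sigma> f)" for y
  proof -
    obtain \<xi> where x: "y = l2norm (pi_tw \<sigma> f \<xi>)" "sq_summable \<xi>" "l2norm \<xi> \<le> 1"
      using yin unfolding opset_def by blast
    show ?thesis using L2bound[of "pi_tw \<sigma> f \<xi>" "C * X"] main[OF x(2,3)] x(1) C0 X0 by auto
  qed
  have ne: "opset (pi_tw \<sigma> f) \<noteq> {}" using zero_sq unfolding opset_def by fastforce
  show "op_norm (pi_tw \<sigma> f) \<le> C * X"
    unfolding op_norm_def opset_def[symmetric] using b ne by (meson cSup_least)
qed



lemma sum_bound_aux:
  fixes t d :: "nat \<Rightarrow> real"
  assumes "finite N" "\<forall>n\<in>N. t n \<le> d n" "summable d" "\<forall>n. d n \<ge> 0"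
  shows "(\<Sum>n\<in>N. t n) \<le> suminf d"
proof -
  have "(\<Sum>n\<in>N. t n) \<le> (\<Sum>n\<in>N. d n)" using assms by (intro sum_mono) auto
  also have "\<dots> \<le> suminf d" using assms by (intro sum_le_suminf) auto
  finally show ?thesis .
qed

lemma poly_term:
  fixes K p c :: real and n :: nat
  assumes "K > 0" "p > 0" "n \<ge> 1" "c \<le> K * (1 + real n) powr p"
  shows "max c 0 / (max 1 (real n)) powr (p + 2) \<le> K * 2 powr p * inverse (real n ^ 2)"
proof -
  have n1: "real n \<ge> 1" using assms by simp
  have m: "max 1 (real n) = real n" using n1 by simp
  have "(1 + real n) powr p \<le> (2 * real n) powr p" using n1 assms by (intro powr_mono2) auto
  also have "\<dots> = 2 powr p * real n powr p" using n1 by (simp add: powr_mult)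
  finally have "max c 0 \<le> K * (2 powr p * real n powr p)"
    using assms by (smt (verit) mult_left_mono powr_ge_zero zero_le_mult_iff)
  moreover have w: "real n powr (p + 2) = real n powr p * real n ^ 2"
    using n1 by (simp add: powr_add powr_realpow'[where n=2, simplified])
  moreover have "real n powr p > 0" using n1 by simp
  ultimately show ?thesis using n1 m
    by (simp add: divide_simps)
qed



lemma sig_le: "normalized_2cocycle \<sigma> \<Longrightarrow> \<forall>g h. cmod (\<sigma> g h) \<le> 1"
  by (simp add: normalized_2cocycle_def)

lemma nat_ceil_le: "L \<ge> 0 \<Longrightarrow> real (nat \<lceil>L\<rceil>) \<le> 1 + L"
  by linarith

lemma part_poly:
  fixes L :: "'g::group_add \<Rightarrow> real"
  assumes L0: "\<forall>g. L g \<ge> 0" and prp: "proper_fun L" and ph: "poly_H_growth L"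
  shows "\<exists>s0>0. \<forall>\<sigma>. normalized_2cocycle \<sigma> \<longrightarrow> decaying \<sigma> (\<lambda>g. (1 + L g) powr s0)"
proof -
  obtain K p where Kp: "K > 0" "p > 0"
    and hK: "\<And>r. r \<ge> 0 \<Longrightarrow> ball_L L r \<noteq> {} \<Longrightarrow> haagerup_content (ball_L L r) \<le> K * (1 + r) powr p"
    using ph unfolding poly_H_growth_def by blast
  define d where "d n = (if n = 0 then K else 0) + K * 2 powr p * inverse (real n ^ 2)" for n :: nat
  have sd: "summable d" unfolding d_def
    by (intro summable_add summable_mult inverse_power_summable summable_finite[of "{0}"]) auto
  have d0: "\<forall>n. d n \<ge> 0" using Kp by (auto simp: d_def)
  show ?thesis
  proof (intro exI[of _ "p + 2"] conjI allI impI)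
    show "p + 2 > 0" using Kp by simp
    fix \<sigma> :: "'g \<Rightarrow> 'g \<Rightarrow> complex" assume "normalized_2cocycle \<sigma>"
    then have sig: "\<forall>g h. cmod (\<sigma> g h) \<le> 1" by (rule sig_le)
    show "decaying \<sigma> (\<lambda>g. (1 + L g) powr (p + 2))"
    proof (rule decay_general[OF L0 prp sig, where w = "\<lambda>n. (max 1 (real n)) powr (p + 2)" and C = "suminf d"])
      show "\<And>n. (max 1 (real n)) powr (p + 2) > 0" by simp
      show "\<And>g. (max 1 (real (nat \<lceil>L g\<rceil>))) powr (p + 2) \<le> (1 + L g) powr (p + 2)"
        using L0 Kp nat_ceil_le by (intro powr_mono2) auto
      fix N assume fN: "finite N" and bN: "\<forall>n\<in>N. ball_L L (real n) \<noteq> {}"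
      show "(\<Sum>n\<in>N. max (haagerup_content (ball_L L (real n))) 0 / (max 1 (real n)) powr (p + 2)) \<le> suminf d"
      proof (rule sum_bound_aux[OF fN _ sd d0], intro ballI)
        fix n assume nN: "n \<in> N"
        have hc: "haagerup_content (ball_L L (real n)) \<le> K * (1 + real n) powr p"
          using hK[of "real n"] bN nN by auto
        show "max (haagerup_content (ball_L L (real n))) 0 / (max 1 (real n)) powr (p + 2) \<le> d n"
        proof (cases "n = 0")
          case True
          then show ?thesis using hc Kp by (simp add: d_def)
        next
          case False
          then have "max (haagerup_content (ball_L L (real n))) 0 / (max 1 (real n)) powr (p + 2)
              \<le> K * 2 powr p * inverse (real n ^ 2)"
            using hc Kp by (intro poly_term) auto
          then show ?thesis using False by (simp add: d_def)
        qed
      qed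
    qed
  qed
qed

lemma part_subexp:
  fixes L :: "'g::group_add \<Rightarrow> real"
  assumes L0: "\<forall>g. L g \<ge> 0" and prp: "proper_fun L" and sh: "subexp_H_growth L"
    and a1: "a > 1" and ns: "normalized_2cocycle \<sigma>"
  shows "decaying \<sigma> (\<lambda>g. a powr L g)"
proof -
  have sig: "\<forall>g h. cmod (\<sigma> g h) \<le> 1" using ns by (rule sig_le)
  define b where "b = sqrt a"
  have b1: "b > 1" using a1 by (simp add: b_def)
  have bb: "b * b = a" using a1 unfolding b_def by simp
  have "b < b * b" using b1 by simp
  then have ba: "b < a" using bb by simp
  obtain r0 where hr: "\<And>r. r \<ge> r0 \<Longrightarrow> ball_L L r \<noteq> {} \<Longrightarrow> haagerup_content (ball_L L r) < b powr r"
    using sh b1 unfolding subexp_H_growth_def by blast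
  define c where "c n = max (haagerup_content (ball_L L (real n))) 0" for n :: nat
  define R where "R = nat \<lceil>r0\<rceil>"
  define M where "M = (\<Sum>n<R. c n)"
  have c0: "c n \<ge> 0" for n by (simp add: c_def)
  have M0: "M \<ge> 0" unfolding M_def using c0 by (simp add: sum_nonneg)
  have cM: "c n \<le> M + b ^ n" if "ball_L L (real n) \<noteq> {}" for n
  proof (cases "n < R")
    case True
    then have "c n \<le> M" unfolding M_def using c0 by (intro member_le_sum) auto
    moreover have "b ^ n \<ge> 0" using b1 by simp
    ultimately show ?thesis by linarith
  next
    case False
    then have "real n \<ge> r0" unfolding R_def by linarith
    then have "haagerup_content (ball_L L (real n)) < b powr real n" using hr that by blast
    then have "c n \<le> b ^ n" using b1 by (simp add: c_def powr_realpow)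
    then show ?thesis using M0 by simp
  qed
  define d where "d n = a * M * (1/a) ^ n + a * (b/a) ^ n" for n :: nat
  have sd: "summable d" unfolding d_def using a1 b1 ba
    by (intro summable_add summable_mult summable_geometric) auto
  have d0: "\<forall>n. d n \<ge> 0" using a1 b1 M0 by (auto simp: d_def)
  show ?thesis
  proof (rule decay_general[OF L0 prp sig, where w = "\<lambda>n. a powr (real n - 1)" and C = "suminf d"])
    show "\<And>n. a powr (real n - 1) > 0" using a1 by simp
    show "a powr (real (nat \<lceil>L g\<rceil>) - 1) \<le> a powr L g" for g
    proof -
      have "real (nat \<lceil>L g\<rceil>) - 1 \<le> L g" using L0[rule_format, of g] by linarith
      then show ?thesis using a1 by (intro powr_mono) auto
    qed
    fix N assume fN: "finite N" and bN: "\<forall>n\<in>N. ball_L L (real n) \<noteq> {}"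
    show "(\<Sum>n\<in>N. max (haagerup_content (ball_L L (real n))) 0 / a powr (real n - 1)) \<le> suminf d"
    proof (rule sum_bound_aux[OF fN _ sd d0], intro ballI)
      fix n assume nN: "n \<in> N"
      have w: "a powr (real n - 1) = a ^ n / a" using a1 by (simp add: powr_diff powr_realpow)
      have an: "a ^ n > 0" using a1 by simp
      have "c n / (a ^ n / a) \<le> (M + b ^ n) / (a ^ n / a)"
        using cM[of n] bN nN an a1 by (intro divide_right_mono) auto
      also have "\<dots> = d n" using a1 an by (simp add: d_def power_divide field_simps)
      finally show "max (haagerup_content (ball_L L (real n))) 0 / a powr (real n - 1) \<le> d n"
        using w by (simp add: c_def)
    qed
  qed
qed


theorem theorem3p13:
  fixes L :: "'g::group_add \<Rightarrow> real"
  assumes "countable (UNIV :: 'g set)" and "infinite (UNIV :: 'g set)"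
    and "\<forall>g. L g \<ge> 0" and "proper_fun L"
  shows "(poly_H_growth L \<longrightarrow>
            (\<exists>s0>0. \<forall>\<sigma>. normalized_2cocycle \<sigma> \<longrightarrow> decaying \<sigma> (\<lambda>g. (1 + L g) powr s0)))
       \<and> (subexp_H_growth L \<longrightarrow>
            (\<forall>a>1. \<forall>\<sigma>. normalized_2cocycle \<sigma> \<longrightarrow> decaying \<sigma> (\<lambda>g. a powr L g)))"
  using part_poly[OF assms(3,4)] part_subexp[OF assms(3,4)] by blast

end
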